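(* Let $\mathcal G$ be a finite connected groupoid and $\alpha=(S_g,\alpha_g)_{g\in\mathcal G}$ a unital group-type partial action of $\mathcal G$ on a ring $S=\bigoplus_{y\in\mathcal G_0}S_y$, with $S_g=S1_g$ and $1_g\neq0$ for all $g\in\mathcal G$. Let $\mathcal H\in\mathrm{wSub}_\alpha(\mathcal G)$, with connected components $\mathcal H_1,\dots,\mathcal H_r$ having object sets $Y_1,\dots,Y_r$ (so $\mathcal G_0=Y_1\,\dot\cup\cdots\dot\cup\,Y_r$). For each $j$ choose $y_j\in Y_j$ and a transversal $\tau_j=\{\tau_{j,z}\}_{z\in Y_j}$ in $\mathcal H_j$ for $y_j$ satisfying $S_{\tau_{j,z}^{-1}}=S_{y_j}$ and $S_{\tau_{j,z}}=S_z$ for all $z\in Y_j$. Let $T=S^{\alpha_{\mathcal H}}$ and $T_{y_j}=S_{y_j}^{\alpha_{\mathcal H_j(y_j)}}$. Then for $g\in\mathcal G$: $g\in\mathcal G_T$ if and only if there exists $1\le k\le r$ such that $s(g),t(g)\in Y_k$ and $\tau_k(g):=\tau_{k,t(g)}^{-1}g\,\tau_{k,s(g)}\in\mathcal G(y_k)_{T_{y_k}}$.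
   Context: A groupoid is a small category with all morphisms invertible; $\mathcal G_0$ is its object set (identified with identity morphisms), $s(g),t(g)$ source and target, $\mathcal G(x,y)=\{g:s(g)=x,t(g)=y\}$, $\mathcal G(x)=\mathcal G(x,x)$; $gh$ defined iff $s(g)=t(h)$; connected means all $\mathcal G(x,y)\ne\emptyset$; connected components are full subgroupoids on classes of $x\sim y\iff\mathcal G(x,y)\neq\emptyset$. A partial action $\alpha=(S_g,\alpha_g)_{g\in\mathcal G}$ on a ring $S$: for each $g$, $S_{t(g)}$ is an ideal of $S$, $S_g$ an ideal of $S_{t(g)}$, $\alpha_g:S_{g^{-1}}\to S_g$ a ring isomorphism; $\alpha_x=\mathrm{id}_{S_x}$; for composable $(g,h)$, $\alpha_h^{-1}(S_{g^{-1}}\cap S_h)\subseteq S_{(gh)^{-1}}$ and $\alpha_g\alpha_h(a)=\alpha_{gh}(a)$ there. Unital: $S_g=S1_g$, $1_g$ central idempotent. A transversal for $x$ in a connected groupoid $\mathcal K$ is $\{\tau_y\}_{y\in\mathcal K_0}$ with $\tau_y\in\mathcal K(x,y)$, $\tau_x=x$; a partial action of connected $\mathcal K$ on $A=\bigoplus_{y\in\mathcal K_0}A_y$ is group-type if some $x$ and transversal satisfy $A_{\tau_y^{-1}}=A_x$, $A_{\tau_y}=A_y$ for all $y$; for non-connected $\mathcal K$ it is group-type if each restriction to a connected component $\mathcal K_Y$ (acting on $\bigoplus_{y\in Y}A_y$) is group-type. For a subgroupoid $\mathcal H$, $\alpha_{\mathcal H}=(S_h,\alpha_h)_{h\in\mathcal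 H}$ acts on $\bigoplus_{z\in\mathcal H_0}S_z$. $\mathrm{wSub}_\alpha(\mathcal G)$ is the set of subgroupoids $\mathcal H$ with $\mathcal H_0=\mathcal G_0$ (wide) and $\alpha_{\mathcal H}$ group-type. For a subgroupoid $\mathcal K$ and subring $A\subseteq S$, $A^{\alpha_{\mathcal K}}=\{a\in A:\alpha_k(a1_{k^{-1}})=a1_k\ \forall k\in\mathcal K\}$. For a subring $T\subseteq S$, $\mathcal G_T=\{g\in\mathcal G:\alpha_g(t1_{g^{-1}})=t1_g\ \forall t\in T\}$; for $y\in\mathcal G_0$ and a subring $B\subseteq S_y$, $\mathcal G(y)_B=\{l\in\mathcal G(y):\alpha_l(b1_{l^{-1}})=b1_l\ \forall b\in B\}$. *)

theory Defs
  imports Main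
begin

text \<open>A groupoid is given by its set of arrows; objects are identified with
identity arrows.  Composition cmp g h (= gh) is meaningful iff src g = tgt h.\<close>

record 'g groupoid =
  arr  :: "'g set"
  src  :: "'g \<Rightarrow> 'g"
  tgt  :: "'g \<Rightarrow> 'g"
  cmp  :: "'g \<Rightarrow> 'g \<Rightarrow> 'g"
  ginv :: "'g \<Rightarrow> 'g"

definition objs :: "('g, 'b) groupoid_scheme \<Rightarrow> 'g set" where
  "objs G = src G ` arr G"

definition is_groupoid :: "('g, 'b) groupoid_scheme \<Rightarrow> bool" where
  "is_groupoid G \<longleftrightarrow>
     (\<forall>g\<in>arr G. src G g \<in> arr G \<and> tgt G g \<in> arr G
        \<and> src G (src G g) = src G g \<and> tgt G (src G g) = src G g
        \<and> src G (tgt G g) = tgt G g \<and> tgt G (tgt G g) = tgt G g) \<and>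
     (\<forall>g\<in>arr G. \<forall>h\<in>arr G. src G g = tgt G h \<longrightarrow>
        cmp G g h \<in> arr G \<and> src G (cmp G g h) = src G h \<and> tgt G (cmp G g h) = tgt G g) \<and>
     (\<forall>f\<in>arr G. \<forall>g\<in>arr G. \<forall>h\<in>arr G. src G f = tgt G g \<longrightarrow> src G g = tgt G h \<longrightarrow>
        cmp G (cmp G f g) h = cmp G f (cmp G g h)) \<and>
     (\<forall>g\<in>arr G. cmp G (tgt G g) g = g \<and> cmp G g (src G g) = g) \<and>
     (\<forall>g\<in>arr G. ginv G g \<in> arr G \<and> src G (ginv G g) = tgt G g \<and> tgt G (ginv G g) = src G g
        \<and> cmp G g (ginv G g) = tgt G g \<and> cmp G (ginv G g) g = src G g)"

definition connected_groupoid :: "('g, 'b) groupoid_scheme \<Rightarrow> bool" where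
  "connected_groupoid G \<longleftrightarrow>
     (\<forall>x\<in>objs G. \<forall>y\<in>objs G. \<exists>g\<in>arr G. src G g = x \<and> tgt G g = y)"

definition subgroupoid :: "('g, 'b) groupoid_scheme \<Rightarrow> 'g set \<Rightarrow> bool" where
  "subgroupoid G H \<longleftrightarrow> H \<subseteq> arr G \<and>
     (\<forall>h\<in>H. src G h \<in> H \<and> tgt G h \<in> H \<and> ginv G h \<in> H) \<and>
     (\<forall>h\<in>H. \<forall>k\<in>H. src G h = tgt G k \<longrightarrow> cmp G h k \<in> H)"

definition sub_objs :: "('g, 'b) groupoid_scheme \<Rightarrow> 'g set \<Rightarrow> 'g set" where
  "sub_objs G H = src G ` H"

definition components :: "('g, 'b) groupoid_scheme \<Rightarrow> 'g set \<Rightarrow> 'g set set" where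
  "components G H =
     {{z \<in> sub_objs G H. \<exists>h\<in>H. src G h = x \<and> tgt G h = z} | x. x \<in> sub_objs G H}"

definition restr :: "('g, 'b) groupoid_scheme \<Rightarrow> 'g set \<Rightarrow> 'g set \<Rightarrow> 'g set" where
  "restr G H Y = {h \<in> H. src G h \<in> Y \<and> tgt G h \<in> Y}"

definition ideal_in :: "'r::ring set \<Rightarrow> 'r set \<Rightarrow> bool" where
  "ideal_in I R \<longleftrightarrow> I \<subseteq> R \<and> 0 \<in> I \<and> (\<forall>a\<in>I. \<forall>b\<in>I. a + b \<in> I) \<and> (\<forall>a\<in>I. - a \<in> I) \<and>
     (\<forall>r\<in>R. \<forall>a\<in>I. r * a \<in> I \<and> a * r \<in> I)"

definition ring_iso_on :: "('r::ring \<Rightarrow> 'r) \<Rightarrow> 'r set \<Rightarrow> 'r set \<Rightarrow> bool" where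
  "ring_iso_on f A B \<longleftrightarrow> bij_betw f A B \<and>
     (\<forall>a\<in>A. \<forall>b\<in>A. f (a + b) = f a + f b \<and> f (a * b) = f a * f b)"

text \<open>D g is the ideal S_g, al g is alpha_g.\<close>
definition partial_action ::
  "('g, 'b) groupoid_scheme \<Rightarrow> ('g \<Rightarrow> 'r::ring set) \<Rightarrow> ('g \<Rightarrow> 'r \<Rightarrow> 'r) \<Rightarrow> bool" where
  "partial_action G D al \<longleftrightarrow>
     (\<forall>g\<in>arr G. ideal_in (D (tgt G g)) UNIV \<and> ideal_in (D g) (D (tgt G g))
        \<and> ring_iso_on (al g) (D (ginv G g)) (D g)) \<and>
     (\<forall>x\<in>objs G. \<forall>a\<in>D x. al x a = a) \<and>
     (\<forall>g\<in>arr G. \<forall>h\<in>arr G. src G g = tgt G h \<longrightarrow>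
        (\<forall>a\<in>D (ginv G h). al h a \<in> D (ginv G g) \<inter> D h \<longrightarrow>
           a \<in> D (ginv G (cmp G g h)) \<and> al g (al h a) = al (cmp G g h) a))"

text \<open>Unital: S_g = S 1_g with 1_g a central idempotent.\<close>
definition unital_pa ::
  "('g, 'b) groupoid_scheme \<Rightarrow> ('g \<Rightarrow> 'r::ring set) \<Rightarrow> ('g \<Rightarrow> 'r) \<Rightarrow> bool" where
  "unital_pa G D e \<longleftrightarrow>
     (\<forall>g\<in>arr G. D g = {a * e g | a. True} \<and> e g * e g = e g \<and> (\<forall>a. a * e g = e g * a))"

definition internal_direct_sum :: "'g set \<Rightarrow> ('g \<Rightarrow> 'r::ring set) \<Rightarrow> bool" where
  "internal_direct_sum Y D \<longleftrightarrow>
     (\<forall>a. \<exists>f. (\<forall>y\<in>Y. f y \<in> D y) \<and> a = (\<Sum>y\<in>Y. f y)) \<and>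
     (\<forall>f f'. (\<forall>y\<in>Y. f y \<in> D y) \<longrightarrow> (\<forall>y\<in>Y. f' y \<in> D y) \<longrightarrow>
        (\<Sum>y\<in>Y. f y) = (\<Sum>y\<in>Y. f' y) \<longrightarrow> (\<forall>y\<in>Y. f y = f' y))"

definition group_type_conn ::
  "('g, 'b) groupoid_scheme \<Rightarrow> 'g set \<Rightarrow> 'g set \<Rightarrow> ('g \<Rightarrow> 'r set) \<Rightarrow> bool" where
  "group_type_conn G K Y D \<longleftrightarrow>
     (\<exists>x\<in>Y. \<exists>tau. tau x = x \<and>
        (\<forall>y\<in>Y. tau y \<in> K \<and> src G (tau y) = x \<and> tgt G (tau y) = y
               \<and> D (ginv G (tau y)) = D x \<and> D (tau y) = D y))"

definition group_type ::
  "('g, 'b) groupoid_scheme \<Rightarrow> 'g set \<Rightarrow> ('g \<Rightarrow> 'r set) \<Rightarrow> bool" where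
  "group_type G H D \<longleftrightarrow> (\<forall>Y\<in>components G H. group_type_conn G (restr G H Y) Y D)"

definition wSub :: "('g, 'b) groupoid_scheme \<Rightarrow> ('g \<Rightarrow> 'r set) \<Rightarrow> 'g set set" where
  "wSub G D = {H. subgroupoid G H \<and> sub_objs G H = objs G \<and> group_type G H D}"

definition fixed_ring ::
  "'g set \<Rightarrow> ('g, 'b) groupoid_scheme \<Rightarrow> ('g \<Rightarrow> 'r \<Rightarrow> 'r) \<Rightarrow> ('g \<Rightarrow> 'r::ring) \<Rightarrow> 'r set \<Rightarrow> 'r set" where
  "fixed_ring K G al e A = {a \<in> A. \<forall>k\<in>K. al k (a * e (ginv G k)) = a * e k}"

definition stab_arr ::
  "('g, 'b) groupoid_scheme \<Rightarrow> ('g \<Rightarrow> 'r \<Rightarrow> 'r) \<Rightarrow> ('g \<Rightarrow> 'r::ring) \<Rightarrow> 'r set \<Rightarrow> 'g set" where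
  "stab_arr G al e T = {g \<in> arr G. \<forall>t\<in>T. al g (t * e (ginv G g)) = t * e g}"

definition stab_iso ::
  "('g, 'b) groupoid_scheme \<Rightarrow> ('g \<Rightarrow> 'r \<Rightarrow> 'r) \<Rightarrow> ('g \<Rightarrow> 'r::ring) \<Rightarrow> 'g \<Rightarrow> 'r set \<Rightarrow> 'g set" where
  "stab_iso G al e y B = {l \<in> arr G. src G l = y \<and> tgt G l = y \<and>
      (\<forall>b\<in>B. al l (b * e (ginv G l)) = b * e l)}"

end

theory Submission
  imports Defs
begin

locale gpd =
  fixes G :: "('g, 'b) groupoid_scheme"
  assumes grpd: "is_groupoid G"
begin

lemma arr_src: "g \<in> arr G \<Longrightarrow> src G g \<in> arr G" using grpd unfolding is_groupoid_def by blast
lemma arr_tgt: "g \<in> arr G \<Longrightarrow> tgt G g \<in> arr G" using grpd unfolding is_groupoid_def by blast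
lemma src_src: "g \<in> arr G \<Longrightarrow> src G (src G g) = src G g" using grpd unfolding is_groupoid_def by blast
lemma tgt_src: "g \<in> arr G \<Longrightarrow> tgt G (src G g) = src G g" using grpd unfolding is_groupoid_def by blast
lemma src_tgt: "g \<in> arr G \<Longrightarrow> src G (tgt G g) = tgt G g" using grpd unfolding is_groupoid_def by blast
lemma tgt_tgt: "g \<in> arr G \<Longrightarrow> tgt G (tgt G g) = tgt G g" using grpd unfolding is_groupoid_def by blast
lemma cmp_arr: "g \<in> arr G \<Longrightarrow> h \<in> arr G \<Longrightarrow> src G g = tgt G h \<Longrightarrow> cmp G g h \<in> arr G"
  using grpd unfolding is_groupoid_def by blast
lemma cmp_src: "g \<in> arr G \<Longrightarrow> h \<in> arr G \<Longrightarrow> src G g = tgt G h \<Longrightarrow> src G (cmp G g h) = src G h"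
  using grpd unfolding is_groupoid_def by blast
lemma cmp_tgt: "g \<in> arr G \<Longrightarrow> h \<in> arr G \<Longrightarrow> src G g = tgt G h \<Longrightarrow> tgt G (cmp G g h) = tgt G g"
  using grpd unfolding is_groupoid_def by blast
lemma assoc: "f \<in> arr G \<Longrightarrow> g \<in> arr G \<Longrightarrow> h \<in> arr G \<Longrightarrow> src G f = tgt G g \<Longrightarrow> src G g = tgt G h \<Longrightarrow>
    cmp G (cmp G f g) h = cmp G f (cmp G g h)"
  using grpd unfolding is_groupoid_def by blast
lemma cmp_tgt_id: "g \<in> arr G \<Longrightarrow> cmp G (tgt G g) g = g" using grpd unfolding is_groupoid_def by blast
lemma cmp_src_id: "g \<in> arr G \<Longrightarrow> cmp G g (src G g) = g" using grpd unfolding is_groupoid_def by blast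
lemma inv_arr: "g \<in> arr G \<Longrightarrow> ginv G g \<in> arr G" using grpd unfolding is_groupoid_def by blast
lemma inv_src: "g \<in> arr G \<Longrightarrow> src G (ginv G g) = tgt G g" using grpd unfolding is_groupoid_def by blast
lemma inv_tgt: "g \<in> arr G \<Longrightarrow> tgt G (ginv G g) = src G g" using grpd unfolding is_groupoid_def by blast
lemma cmp_inv_r: "g \<in> arr G \<Longrightarrow> cmp G g (ginv G g) = tgt G g" using grpd unfolding is_groupoid_def by blast
lemma cmp_inv_l: "g \<in> arr G \<Longrightarrow> cmp G (ginv G g) g = src G g" using grpd unfolding is_groupoid_def by blast

lemmas gsimps = arr_src arr_tgt src_src tgt_src src_tgt tgt_tgt inv_arr inv_src inv_tgt

lemma inv_inv: assumes "g \<in> arr G" shows "ginv G (ginv G g) = g"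
proof -
  let ?i = "ginv G g" let ?j = "ginv G ?i"
  have "?j = cmp G ?j (src G ?j)" using cmp_src_id[OF inv_arr[OF inv_arr[OF assms]]] by simp
  also have "src G ?j = cmp G ?i g" using assms by (simp add: gsimps cmp_inv_l)
  also have "cmp G ?j (cmp G ?i g) = cmp G (cmp G ?j ?i) g"
    using assms by (simp add: assoc gsimps)
  also have "cmp G ?j ?i = tgt G g" using assms by (simp add: cmp_inv_l gsimps)
  finally show ?thesis using assms cmp_tgt_id by simp
qed

lemma inv_cmp: assumes "g \<in> arr G" "h \<in> arr G" "src G g = tgt G h"
  shows "ginv G (cmp G g h) = cmp G (ginv G h) (ginv G g)"
proof -
  let ?c = "cmp G g h" let ?q = "cmp G (ginv G h) (ginv G g)"
  have c: "?c \<in> arr G" "src G ?c = src G h" "tgt G ?c = tgt G g"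
    using assms cmp_arr cmp_src cmp_tgt by auto
  have q: "?q \<in> arr G" "src G ?q = tgt G g" "tgt G ?q = src G h"
    using assms by (auto simp: gsimps cmp_arr cmp_src cmp_tgt)
  have qc: "cmp G ?q ?c = src G h"
  proof -
    have "cmp G ?q ?c = cmp G (ginv G h) (cmp G (ginv G g) (cmp G g h))"
      using assms by (simp add: assoc gsimps cmp_arr cmp_tgt)
    also have "cmp G (ginv G g) (cmp G g h) = cmp G (cmp G (ginv G g) g) h"
      using assms by (simp add: assoc gsimps)
    also have "\<dots> = h" using assms by (simp add: cmp_inv_l cmp_tgt_id)
    finally show ?thesis using assms by (simp add: cmp_inv_l)
  qed
  have "ginv G ?c = cmp G (tgt G (ginv G ?c)) (ginv G ?c)" using cmp_tgt_id[OF inv_arr[OF c(1)]] by simp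
  also have "tgt G (ginv G ?c) = cmp G ?q ?c" using c qc by (simp add: gsimps)
  also have "cmp G (cmp G ?q ?c) (ginv G ?c) = cmp G ?q (cmp G ?c (ginv G ?c))"
    using c q by (simp add: assoc gsimps)
  also have "\<dots> = ?q" using c q cmp_src_id[OF q(1)] by (simp add: cmp_inv_r)
  finally show ?thesis .
qed

lemma obj_inv: assumes "x \<in> arr G" "src G x = x" shows "ginv G x = x"
proof -
  have "tgt G x = x" using assms tgt_src by metis
  have "ginv G x = cmp G (tgt G (ginv G x)) (ginv G x)" using cmp_tgt_id[OF inv_arr[OF assms(1)]] by simp
  also have "\<dots> = cmp G x (ginv G x)" using assms by (simp add: gsimps)
  also have "\<dots> = x" using assms \<open>tgt G x = x\<close> by (simp add: cmp_inv_r)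
  finally show ?thesis .
qed

end

locale pact = gpd G for G :: "('g, 'b) groupoid_scheme" +
  fixes D :: "'g \<Rightarrow> 'r::ring set" and al :: "'g \<Rightarrow> 'r \<Rightarrow> 'r" and e :: "'g \<Rightarrow> 'r"
  assumes pa: "partial_action G D al" and unital: "unital_pa G D e"
begin

lemma D_eq: "g \<in> arr G \<Longrightarrow> D g = {a * e g | a. True}" using unital unfolding unital_pa_def by blast
lemma e_idem: "g \<in> arr G \<Longrightarrow> e g * e g = e g" using unital unfolding unital_pa_def by blast
lemma e_central: "g \<in> arr G \<Longrightarrow> a * e g = e g * a" using unital unfolding unital_pa_def by blast

lemma memD: assumes "g \<in> arr G" shows "x \<in> D g \<longleftrightarrow> x * e g = x"
proof
  assume "x \<in> D g" then obtain a where "x = a * e g" using D_eq[OF assms] by blast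
  then show "x * e g = x" using e_idem[OF assms] by (simp add: mult.assoc)
next
  assume "x * e g = x" then have "x = x * e g" by simp
  then show "x \<in> D g" using D_eq[OF assms] by blast
qed

lemma eD: "g \<in> arr G \<Longrightarrow> e g \<in> D g" using memD e_idem by blast
lemma idr: "g \<in> arr G \<Longrightarrow> x \<in> D g \<Longrightarrow> x * e g = x" using memD by blast
lemma idl: "g \<in> arr G \<Longrightarrow> x \<in> D g \<Longrightarrow> e g * x = x" using idr e_central by metis
lemma mulD_r: assumes "g \<in> arr G" "x \<in> D g" shows "x * r \<in> D g"
proof -
  have "x * r * e g = x * (r * e g)" by (simp add: mult.assoc)
  also have "\<dots> = x * (e g * r)" using e_central[OF assms(1), of r] by simp
  also have "\<dots> = x * r" using idr[OF assms] by (simp add: mult.assoc[symmetric])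
  finally show ?thesis using memD[OF assms(1)] by blast
qed
lemma mulD_l: assumes "g \<in> arr G" "x \<in> D g" shows "r * x \<in> D g"
  unfolding memD[OF assms(1)] using idr[OF assms] by (simp add: mult.assoc)
lemma zeroD: "g \<in> arr G \<Longrightarrow> 0 \<in> D g" using memD by simp

lemma pa1: "g \<in> arr G \<Longrightarrow> ideal_in (D g) (D (tgt G g)) \<and> ring_iso_on (al g) (D (ginv G g)) (D g)"
  using pa unfolding partial_action_def by simp
lemma D_tgt: "g \<in> arr G \<Longrightarrow> D g \<subseteq> D (tgt G g)"
  using pa1 unfolding ideal_in_def by simp
lemma D_inv_src: "g \<in> arr G \<Longrightarrow> D (ginv G g) \<subseteq> D (src G g)"
  using D_tgt[OF inv_arr] inv_tgt by metis
lemma iso: "g \<in> arr G \<Longrightarrow> ring_iso_on (al g) (D (ginv G g)) (D g)"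
  using pa1 by simp
lemma al_maps: "g \<in> arr G \<Longrightarrow> x \<in> D (ginv G g) \<Longrightarrow> al g x \<in> D g"
  using iso unfolding ring_iso_on_def bij_betw_def by blast
lemma al_inj: "g \<in> arr G \<Longrightarrow> x \<in> D (ginv G g) \<Longrightarrow> z \<in> D (ginv G g) \<Longrightarrow> al g x = al g z \<Longrightarrow> x = z"
  using iso unfolding ring_iso_on_def bij_betw_def inj_on_def by blast
lemma al_surj: "g \<in> arr G \<Longrightarrow> w \<in> D g \<Longrightarrow> \<exists>x\<in>D (ginv G g). w = al g x"
  using iso unfolding ring_iso_on_def bij_betw_def by blast
lemma al_mult: "g \<in> arr G \<Longrightarrow> x \<in> D (ginv G g) \<Longrightarrow> z \<in> D (ginv G g) \<Longrightarrow> al g (x * z) = al g x * al g z"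
  using iso unfolding ring_iso_on_def by blast
lemma al_add: "g \<in> arr G \<Longrightarrow> x \<in> D (ginv G g) \<Longrightarrow> z \<in> D (ginv G g) \<Longrightarrow> al g (x + z) = al g x + al g z"
  using iso unfolding ring_iso_on_def by blast
lemma al_0: assumes "g \<in> arr G" shows "al g 0 = 0"
proof -
  have "al g (0 + 0) = al g 0 + al g 0" using al_add[OF assms] zeroD[OF inv_arr[OF assms]] by blast
  then show ?thesis by simp
qed
lemma al_e: assumes "g \<in> arr G" shows "al g (e (ginv G g)) = e g"
proof -
  let ?z = "al g (e (ginv G g))"
  have zD: "?z \<in> D g" using al_maps[OF assms eD[OF inv_arr[OF assms]]] .
  have "?z * e g = e g"
  proof -
    obtain x where x: "x \<in> D (ginv G g)" "e g = al g x" using al_surj[OF assms eD[OF assms]] by blast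
    have "?z * e g = al g (e (ginv G g) * x)" using x al_mult[OF assms eD[OF inv_arr[OF assms]] x(1)] by simp
    also have "\<dots> = e g" using x idl[OF inv_arr[OF assms]] by simp
    finally show ?thesis .
  qed
  then show ?thesis using idr[OF assms zD] by simp
qed
lemma objs_arr: "x \<in> objs G \<Longrightarrow> x \<in> arr G" unfolding objs_def using arr_src by blast
lemma objs_src: "x \<in> objs G \<Longrightarrow> src G x = x" unfolding objs_def using src_src by blast
lemma objs_tgt: "x \<in> objs G \<Longrightarrow> tgt G x = x" unfolding objs_def using tgt_src by blast
lemma objs_inv: "x \<in> objs G \<Longrightarrow> ginv G x = x" using obj_inv objs_arr objs_src by blast
lemma src_objs: "g \<in> arr G \<Longrightarrow> src G g \<in> objs G" unfolding objs_def by blast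
lemma tgt_objs: "g \<in> arr G \<Longrightarrow> tgt G g \<in> objs G" unfolding objs_def using src_tgt arr_tgt by (metis image_eqI)
lemma al_obj: "x \<in> objs G \<Longrightarrow> a \<in> D x \<Longrightarrow> al x a = a"
  using pa unfolding partial_action_def by simp
lemma comp: "g \<in> arr G \<Longrightarrow> h \<in> arr G \<Longrightarrow> src G g = tgt G h \<Longrightarrow> a \<in> D (ginv G h) \<Longrightarrow>
   al h a \<in> D (ginv G g) \<Longrightarrow> al h a \<in> D h \<Longrightarrow>
   a \<in> D (ginv G (cmp G g h)) \<and> al g (al h a) = al (cmp G g h) a"
  using pa unfolding partial_action_def by simp
lemma al_inv: assumes "g \<in> arr G" "a \<in> D g" shows "al g (al (ginv G g) a) = a"
proof -
  have ig: "ginv G g \<in> arr G" using inv_arr[OF assms(1)] .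
  have a1: "a \<in> D (ginv G (ginv G g))" using assms inv_inv by simp
  have b: "al (ginv G g) a \<in> D (ginv G g)" using al_maps[OF ig a1] .
  have "al g (al (ginv G g) a) = al (cmp G g (ginv G g)) a"
    using comp[OF assms(1) ig _ a1 b b] assms(1) by (simp add: gsimps)
  also have "cmp G g (ginv G g) = tgt G g" using cmp_inv_r assms by simp
  also have "al (tgt G g) a = a" using al_obj tgt_objs assms D_tgt by blast
  finally show ?thesis .
qed
lemma al_inv': assumes "g \<in> arr G" "a \<in> D (ginv G g)" shows "al (ginv G g) (al g a) = a"
  using al_inv[OF inv_arr[OF assms(1)]] assms inv_inv by simp
lemma e_eq: assumes "g \<in> arr G" "h \<in> arr G" "D g = D h" shows "e g = e h"
proof -
  have "e g * e h = e g" using idr[OF assms(2)] eD[OF assms(1)] assms(3) by simp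
  moreover have "e h * e g = e h" using idr[OF assms(1)] eD[OF assms(2)] assms(3) by simp
  ultimately show ?thesis using e_central[OF assms(1), of "e h"] by simp
qed


lemma core:
  assumes g: "g \<in> arr G" and s1: "s1 \<in> arr G" and r1: "r1 \<in> arr G"
    and ss1: "src G s1 = y" and sr1: "src G r1 = y" and ts1: "tgt G s1 = src G g" and tr1: "tgt G r1 = tgt G g"
    and Ds1i: "D (ginv G s1) = D y" and Ds1: "D s1 = D (src G g)"
    and Dr1i: "D (ginv G r1) = D y" and Dr1: "D r1 = D (tgt G g)"
    and b: "b \<in> D y"
    and ldef: "l = cmp G (ginv G r1) (cmp G g s1)"
  shows "al g (al s1 b * e (ginv G g)) = al r1 b * e g \<longleftrightarrow> al l (b * e (ginv G l)) = b * e l"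
proof -
  define k where "k = cmp G g s1"
  have k: "k \<in> arr G" "src G k = y" "tgt G k = tgt G g"
    using g s1 ts1 ss1 unfolding k_def by (auto simp: cmp_arr cmp_src cmp_tgt)
  have ir1: "ginv G r1 \<in> arr G" "src G (ginv G r1) = tgt G k" "tgt G (ginv G r1) = y"
    using r1 k tr1 sr1 by (auto simp: gsimps)
  have l: "l \<in> arr G" "src G l = y" "tgt G l = y"
    using ir1 k unfolding ldef k_def[symmetric] by (auto simp: cmp_arr cmp_src cmp_tgt)
  have yo: "y \<in> objs G" using src_objs[OF s1] ss1 by simp
  have ya: "y \<in> arr G" using objs_arr[OF yo] .
  have ik: "ginv G k \<in> arr G" "src G (ginv G k) = tgt G g" "tgt G (ginv G k) = y" using k by (auto simp: gsimps)
  have il: "ginv G l \<in> arr G" "src G (ginv G l) = y" "tgt G (ginv G l) = y" using l by (auto simp: gsimps)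
  have Dk_y: "D (ginv G k) \<subseteq> D y" using D_inv_src[OF k(1)] k by simp
  have Dl_y: "D l \<subseteq> D y" using D_tgt[OF l(1)] l by simp
  have Dil_y: "D (ginv G l) \<subseteq> D y" using D_inv_src[OF l(1)] l by simp
  have ii: "x \<in> D (ginv G l) \<and> al k x = al r1 (al l x)" if x: "x \<in> D (ginv G k)" for x
  proof -
    have w: "al k x \<in> D k" using al_maps[OF k(1) x] .
    have w2: "al k x \<in> D (ginv G (ginv G r1))" using w D_tgt[OF k(1)] k(3) Dr1 inv_inv[OF r1] by auto
    have c: "x \<in> D (ginv G l) \<and> al (ginv G r1) (al k x) = al l x"
      using comp[OF ir1(1) k(1) ir1(2) x w2 w] unfolding ldef k_def by simp
    have "al r1 (al l x) = al k x"
      using c al_inv[OF r1, of "al k x"] w2 inv_inv[OF r1] by simp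
    then show ?thesis using c by simp
  qed
  have i2: "x \<in> D (ginv G k)" if x: "x \<in> D (ginv G l)" for x
  proof -
    have a1: "al l x \<in> D l" using al_maps[OF l(1) x] .
    have a2: "al l x \<in> D (ginv G r1)" using a1 Dl_y Dr1i by auto
    have "cmp G r1 l = k"
    proof -
      have "cmp G r1 l = cmp G (cmp G r1 (ginv G r1)) k"
        unfolding ldef k_def[symmetric] using assoc[OF r1 ir1(1) k(1) inv_tgt[OF r1, symmetric] ir1(2)] by simp
      also have "\<dots> = k" using cmp_inv_r[OF r1] tr1 k cmp_tgt_id[OF k(1)] by simp
      finally show ?thesis .
    qed
    then show ?thesis using comp[OF r1 l(1) _ x a2 a1] sr1 l(3) by simp
  qed
  have Dkl: "D (ginv G k) = D (ginv G l)" using ii i2 by blast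
  define E where "E = e (ginv G k)"
  have El: "E = e (ginv G l)" unfolding E_def using e_eq[OF ik(1) il(1) Dkl] .
  have ED: "E \<in> D (ginv G k)" unfolding E_def using eD[OF ik(1)] .
  have iii: "al s1 x \<in> D (ginv G g) \<and> al g (al s1 x) = al k x" if x: "x \<in> D (ginv G k)" for x
  proof -
    have w: "al k x \<in> D k" using al_maps[OF k(1) x] .
    have w1: "al k x \<in> D (ginv G (ginv G k))" using w inv_inv[OF k(1)] by simp
    have bk: "al (ginv G k) (al k x) = x" using al_inv'[OF k(1) x] .
    have xs: "x \<in> D (ginv G s1)" using x Dk_y Ds1i by auto
    have cs: "cmp G s1 (ginv G k) = ginv G g"
    proof -
      have "ginv G k = cmp G (ginv G s1) (ginv G g)" unfolding k_def using inv_cmp[OF g s1 ts1[symmetric]] .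
      then have "cmp G s1 (ginv G k) = cmp G (cmp G s1 (ginv G s1)) (ginv G g)"
        using s1 g ts1 by (simp add: assoc gsimps)
      also have "\<dots> = ginv G g" using cmp_inv_r[OF s1] ts1 cmp_tgt_id[OF inv_arr[OF g]] g by (simp add: gsimps)
      finally show ?thesis .
    qed
    have c: "al k x \<in> D (ginv G (ginv G g)) \<and> al s1 x = al (ginv G g) (al k x)"
      using comp[OF s1 ik(1) _ w1, unfolded bk] ss1 ik(3) xs x cs by simp
    have "al s1 x \<in> D (ginv G g)" using c al_maps[OF inv_arr[OF g]] by simp
    moreover have "al g (al s1 x) = al k x" using c al_inv[OF g] inv_inv[OF g] by simp
    ultimately show ?thesis by simp
  qed
  have surj: "\<exists>x\<in>D (ginv G k). z = al s1 x" if z: "z \<in> D (ginv G g)" for z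
  proof -
    have zs: "z \<in> D s1" using z D_inv_src[OF g] Ds1 by auto
    define x where "x = al (ginv G s1) z"
    have xD: "x \<in> D (ginv G s1)" unfolding x_def using al_maps[OF inv_arr[OF s1]] zs inv_inv[OF s1] by simp
    have ax: "al s1 x = z" unfolding x_def using al_inv[OF s1 zs] .
    have "x \<in> D (ginv G k)" using comp[OF g s1 ts1[symmetric] xD] ax z zs unfolding k_def by simp
    then show ?thesis using ax by blast
  qed
  have iv: "al s1 E = e (ginv G g)"
  proof -
    have z0: "al s1 E \<in> D (ginv G g)" using iii[OF ED] by simp
    obtain x where x: "x \<in> D (ginv G k)" "e (ginv G g) = al s1 x" using surj[OF eD[OF inv_arr[OF g]]] by blast
    have "al s1 E * e (ginv G g) = al s1 (E * x)"
    proof -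
      have "E \<in> D y" "x \<in> D y" using x ED Dk_y by auto
      then show ?thesis using x al_mult[OF s1, of E x] Ds1i by simp
    qed
    also have "E * x = x" unfolding E_def using idl[OF ik(1) x(1)] .
    finally have "al s1 E * e (ginv G g) = e (ginv G g)" using x by simp
    then show ?thesis using idr[OF inv_arr[OF g] z0] by simp
  qed
  have v: "al r1 (e l) = e g"
  proof -
    have "e l = al l E" using al_e[OF l(1)] El by simp
    then have "al r1 (e l) = al k E" using ii[OF ED] by simp
    also have "\<dots> = al g (al s1 E)" using iii[OF ED] by simp
    also have "\<dots> = e g" using iv al_e[OF g] by simp
    finally show ?thesis .
  qed
  have bE: "b * E \<in> D (ginv G k)" using mulD_l[OF ik(1) ED] .
  have bs: "b \<in> D (ginv G s1)" using b Ds1i by simp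
  have Es: "E \<in> D (ginv G s1)" using ED Dk_y Ds1i by auto
  have br: "b \<in> D (ginv G r1)" using b Dr1i by simp
  have elr: "e l \<in> D (ginv G r1)" using eD[OF l(1)] Dl_y Dr1i by auto
  have "al g (al s1 b * e (ginv G g)) = al g (al s1 (b * E))"
    using iv al_mult[OF s1 bs Es] by simp
  also have "\<dots> = al k (b * E)" using iii[OF bE] by simp
  also have "\<dots> = al r1 (al l (b * e (ginv G l)))" using ii[OF bE] El by simp
  finally have L: "al g (al s1 b * e (ginv G g)) = al r1 (al l (b * e (ginv G l)))" .
  have R: "al r1 b * e g = al r1 (b * e l)" using v al_mult[OF r1 br elr] by simp
  have X: "al l (b * e (ginv G l)) \<in> D (ginv G r1)"
    using al_maps[OF l(1) mulD_l[OF il(1) eD[OF il(1)]]] Dl_y Dr1i by auto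
  have Y: "b * e l \<in> D (ginv G r1)" using mulD_r[OF ya b] Dr1i by simp
  show ?thesis unfolding L R using al_inj[OF r1 X Y] by auto
qed

end

locale mctx = pact G D al e for G :: "'g groupoid" and D :: "'g \<Rightarrow> 'r::ring set" and al e +
  fixes H :: "'g set" and r :: nat and Y :: "nat \<Rightarrow> 'g set"
    and y :: "nat \<Rightarrow> 'g" and tau :: "nat \<Rightarrow> 'g \<Rightarrow> 'g"
  assumes fin: "finite (arr G)"
    and dsum: "internal_direct_sum (objs G) D"
    and nz: "\<forall>g\<in>arr G. e g \<noteq> 0"
    and Hw: "H \<in> wSub G D"
    and comps: "Y ` {1..r} = components G H"
    and base: "\<forall>j\<in>{1..r}. y j \<in> Y j \<and> tau j (y j) = y j"
    and transv: "\<forall>j\<in>{1..r}. \<forall>z\<in>Y j. tau j z \<in> restr G H (Y j)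
                    \<and> src G (tau j z) = y j \<and> tgt G (tau j z) = z
                    \<and> D (ginv G (tau j z)) = D (y j) \<and> D (tau j z) = D z"
begin

abbreviation "T \<equiv> fixed_ring H G al e UNIV"
abbreviation "Iso k \<equiv> {l \<in> restr G H (Y k). src G l = y k \<and> tgt G l = y k}"
abbreviation "Tk k \<equiv> fixed_ring (Iso k) G al e (D (y k))"

lemma subg: "subgroupoid G H" using Hw unfolding wSub_def by blast
lemma subobjs: "sub_objs G H = objs G" using Hw unfolding wSub_def by blast
lemma H_arr: "h \<in> H \<Longrightarrow> h \<in> arr G" using subg unfolding subgroupoid_def by blast
lemma H_inv: "h \<in> H \<Longrightarrow> ginv G h \<in> H" using subg unfolding subgroupoid_def by blast
lemma H_src: "h \<in> H \<Longrightarrow> src G h \<in> H" using subg unfolding subgroupoid_def by blast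
lemma H_cmp: "h \<in> H \<Longrightarrow> k \<in> H \<Longrightarrow> src G h = tgt G k \<Longrightarrow> cmp G h k \<in> H"
  using subg unfolding subgroupoid_def by blast

lemma Y_comp: assumes "k \<in> {1..r}" shows "\<exists>x. Y k = {z \<in> sub_objs G H. \<exists>h\<in>H. src G h = x \<and> tgt G h = z}"
proof -
  have "Y k \<in> components G H" using comps assms imageI by metis
  then show ?thesis unfolding components_def by (simp only: mem_Collect_eq) blast
qed

lemma Y_objs: assumes "k \<in> {1..r}" shows "Y k \<subseteq> objs G"
proof -
  obtain x where "Y k = {z \<in> sub_objs G H. \<exists>h\<in>H. src G h = x \<and> tgt G h = z}" using Y_comp[OF assms] by blast
  then show ?thesis using subobjs by auto
qed

lemma finY: "k \<in> {1..r} \<Longrightarrow> finite (Y k)"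
proof -
  have "finite (objs G)" unfolding objs_def using fin by simp
  then show "k \<in> {1..r} \<Longrightarrow> finite (Y k)" using Y_objs finite_subset by blast
qed

lemma Y_tgt: assumes k: "k \<in> {1..r}" and h: "h \<in> H" and p: "src G h \<in> Y k" shows "tgt G h \<in> Y k"
proof -
  obtain x where x: "Y k = {z \<in> sub_objs G H. \<exists>h\<in>H. src G h = x \<and> tgt G h = z}" using Y_comp[OF k] by blast
  have "src G h \<in> {z \<in> sub_objs G H. \<exists>h\<in>H. src G h = x \<and> tgt G h = z}" using p x by simp
  then obtain h' where h': "h' \<in> H" "src G h' = x" "tgt G h' = src G h" by blast
  have c: "cmp G h h' \<in> H" using H_cmp[OF h h'(1)] h'(3) by simp
  have c2: "src G (cmp G h h') = x" "tgt G (cmp G h h') = tgt G h"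
    using cmp_src[OF H_arr[OF h] H_arr[OF h'(1)]] cmp_tgt[OF H_arr[OF h] H_arr[OF h'(1)]] h' by auto
  have "tgt G h = src G (ginv G h)" using inv_src[OF H_arr[OF h]] by simp
  then have so: "tgt G h \<in> sub_objs G H" unfolding sub_objs_def using H_inv[OF h] by (rule image_eqI)
  have "tgt G h \<in> {z \<in> sub_objs G H. \<exists>h\<in>H. src G h = x \<and> tgt G h = z}"
    using so c c2 by blast
  then show ?thesis using x by simp
qed

lemma Y_src: assumes k: "k \<in> {1..r}" and h: "h \<in> H" and q: "tgt G h \<in> Y k" shows "src G h \<in> Y k"
proof -
  have "src G (ginv G h) \<in> Y k" using q inv_src[OF H_arr[OF h]] by simp
  then have "tgt G (ginv G h) \<in> Y k" using Y_tgt[OF k H_inv[OF h]] by simp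
  then show ?thesis using inv_tgt[OF H_arr[OF h]] by simp
qed

lemma Y_cover: assumes z: "z \<in> objs G" shows "\<exists>k\<in>{1..r}. z \<in> Y k"
proof -
  have "z \<in> src G ` H" using z subobjs unfolding sub_objs_def by simp
  then obtain h where h: "h \<in> H" "z = src G h" by blast
  define C where "C = {z' \<in> sub_objs G H. \<exists>h'\<in>H. src G h' = z \<and> tgt G h' = z'}"
  have "C \<in> components G H" unfolding components_def C_def using h z subobjs by blast
  then have "C \<in> Y ` {1..r}" using comps by simp
  then obtain k where k: "k \<in> {1..r}" "C = Y k" by (rule imageE) simp
  have hs: "src G h \<in> H" "src G (src G h) = src G h" "tgt G (src G h) = src G h"
    using H_src[OF h(1)] src_src[OF H_arr[OF h(1)]] tgt_src[OF H_arr[OF h(1)]] by auto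
  have "z \<in> C" unfolding C_def using hs h z subobjs by auto
  then show ?thesis using k by blast
qed

lemma orth: assumes z: "z \<in> objs G" and w: "w \<in> objs G" and zw: "z \<noteq> w" and x: "x \<in> D z"
  shows "x * e w = 0"
proof -
  let ?c = "x * e w"
  have cz: "?c \<in> D z" using mulD_r[OF objs_arr[OF z] x] .
  have cw: "?c \<in> D w" using mulD_l[OF objs_arr[OF w] eD[OF objs_arr[OF w]]] .
  have fo: "finite (objs G)" unfolding objs_def using fin by simp
  let ?f = "\<lambda>v. if v = z then ?c else 0" and ?f' = "\<lambda>v. if v = w then ?c else 0"
  have f1: "\<forall>v\<in>objs G. ?f v \<in> D v" using cz zeroD objs_arr by auto
  have f2: "\<forall>v\<in>objs G. ?f' v \<in> D v" using cw zeroD objs_arr by auto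
  have S: "(\<Sum>v\<in>objs G. ?f v) = (\<Sum>v\<in>objs G. ?f' v)" using fo z w by (simp add: sum.delta')
  have U: "\<forall>f f'. (\<forall>v\<in>objs G. f v \<in> D v) \<longrightarrow> (\<forall>v\<in>objs G. f' v \<in> D v) \<longrightarrow>
        (\<Sum>v\<in>objs G. f v) = (\<Sum>v\<in>objs G. f' v) \<longrightarrow> (\<forall>v\<in>objs G. f v = f' v)"
    using dsum unfolding internal_direct_sum_def by blast
  have "\<forall>v\<in>objs G. ?f v = ?f' v"
    using mp[OF mp[OF mp[OF spec[where x = ?f', OF spec[where x = ?f, OF U]] f1] f2] S] .
  then have "?f z = ?f' z" using z by blast
  then show ?thesis using zw by simp
qed

lemma tau_facts: assumes k: "k \<in> {1..r}" and z: "z \<in> Y k"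
  shows "tau k z \<in> H" "tau k z \<in> arr G" "src G (tau k z) = y k" "tgt G (tau k z) = z"
    "D (ginv G (tau k z)) = D (y k)" "D (tau k z) = D z"
    "e (ginv G (tau k z)) = e (y k)" "e (tau k z) = e z"
proof -
  show 1: "tau k z \<in> H" "src G (tau k z) = y k" "tgt G (tau k z) = z"
    "D (ginv G (tau k z)) = D (y k)" "D (tau k z) = D z" using transv k z unfolding restr_def by auto
  show 2: "tau k z \<in> arr G" using H_arr 1 by simp
  show "e (ginv G (tau k z)) = e (y k)"
    using e_eq[OF inv_arr[OF 2], of "y k"] 1 arr_src[OF 2] by simp
  show "e (tau k z) = e z"
    using e_eq[OF 2, of z] 1 arr_tgt[OF 2] by simp
qed

lemma y_facts: assumes k: "k \<in> {1..r}" shows "y k \<in> Y k" "y k \<in> objs G" "y k \<in> arr G" "tau k (y k) = y k"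
proof -
  show 1: "y k \<in> Y k" "tau k (y k) = y k" using base k by auto
  show 2: "y k \<in> objs G" using 1 Y_objs[OF k] by blast
  show "y k \<in> arr G" using objs_arr[OF 2] .
qed

lemma L5: assumes t: "t \<in> T" and k: "k \<in> {1..r}" and z: "z \<in> Y k"
  shows "al (tau k z) (t * e (y k)) = t * e z"
  using t tau_facts[OF k z] unfolding fixed_ring_def by force

lemma L6: assumes t: "t \<in> T" and k: "k \<in> {1..r}" shows "t * e (y k) \<in> Tk k"
proof -
  have ya: "y k \<in> arr G" using y_facts[OF k] by simp
  have "al m (t * e (y k) * e (ginv G m)) = t * e (y k) * e m" if m: "m \<in> Iso k" for m
  proof -
    have ma: "m \<in> arr G" "m \<in> H" using m H_arr unfolding restr_def by auto
    have "e (y k) * e (ginv G m) = e (ginv G m)"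
      using idl[OF ya] eD[OF inv_arr[OF ma(1)]] D_inv_src[OF ma(1)] m by auto
    moreover have "e (y k) * e m = e m"
      using idl[OF ya] eD[OF ma(1)] D_tgt[OF ma(1)] m by auto
    moreover have "al m (t * e (ginv G m)) = t * e m" using t ma unfolding fixed_ring_def by blast
    ultimately show ?thesis by (simp add: mult.assoc)
  qed
  moreover have "t * e (y k) \<in> D (y k)" using mulD_l[OF ya eD[OF ya]] .
  ultimately show ?thesis unfolding fixed_ring_def by blast
qed

lemma L9: assumes k: "k \<in> {1..r}" shows "e (y k) \<in> Tk k"
proof -
  have ya: "y k \<in> arr G" using y_facts[OF k] by simp
  have "al m (e (y k) * e (ginv G m)) = e (y k) * e m" if m: "m \<in> Iso k" for m
  proof -
    have ma: "m \<in> arr G" using m H_arr unfolding restr_def by auto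
    have "e (y k) * e (ginv G m) = e (ginv G m)"
      using idl[OF ya] eD[OF inv_arr[OF ma(1)]] D_inv_src[OF ma(1)] m by auto
    moreover have "e (y k) * e m = e m"
      using idl[OF ya] eD[OF ma(1)] D_tgt[OF ma(1)] m by auto
    ultimately show ?thesis using al_e[OF ma] by simp
  qed
  then show ?thesis using eD[OF ya] unfolding fixed_ring_def by blast
qed

lemma L8: assumes t: "t \<in> T" and k: "k \<in> {1..r}" and g: "g \<in> arr G"
  and u: "src G g \<in> Y k" and v: "tgt G g \<in> Y k"
  and ldef: "l = cmp G (ginv G (tau k (tgt G g))) (cmp G g (tau k (src G g)))"
  shows "al g (t * e (ginv G g)) = t * e g \<longleftrightarrow>
     al l (t * e (y k) * e (ginv G l)) = t * e (y k) * e l"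
proof -
  have ua: "src G g \<in> arr G" "tgt G g \<in> arr G" using g gsimps by auto
  have ya: "y k \<in> arr G" using y_facts[OF k] by simp
  have "t * e (ginv G g) = t * e (src G g) * e (ginv G g)"
    using idl[OF ua(1)] eD[OF inv_arr[OF g]] D_inv_src[OF g] by (auto simp: mult.assoc)
  also have "t * e (src G g) = al (tau k (src G g)) (t * e (y k))" using L5[OF t k u] by simp
  finally have 1: "t * e (ginv G g) = al (tau k (src G g)) (t * e (y k)) * e (ginv G g)" .
  have "t * e g = t * e (tgt G g) * e g"
    using idl[OF ua(2)] eD[OF g] D_tgt[OF g] by (auto simp: mult.assoc)
  also have "t * e (tgt G g) = al (tau k (tgt G g)) (t * e (y k))" using L5[OF t k v] by simp
  finally have 2: "t * e g = al (tau k (tgt G g)) (t * e (y k)) * e g" .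
  show ?thesis unfolding 1 2
    by (rule core[OF g tau_facts(2)[OF k u] tau_facts(2)[OF k v] tau_facts(3)[OF k u] tau_facts(3)[OF k v]
        tau_facts(4)[OF k u] tau_facts(4)[OF k v] tau_facts(5)[OF k u] tau_facts(6)[OF k u]
        tau_facts(5)[OF k v] tau_facts(6)[OF k v] mulD_l[OF ya eD[OF ya]] ldef])
qed


lemma L7: assumes k: "k \<in> {1..r}" and b: "b \<in> Tk k"
  shows "\<exists>t\<in>T. t * e (y k) = b \<and> (\<forall>w\<in>objs G - Y k. t * e w = 0)"
proof -
  define t where "t = (\<Sum>z\<in>Y k. al (tau k z) b)"
  have bD: "b \<in> D (y k)" using b unfolding fixed_ring_def by blast
  have bfix: "\<And>m. m \<in> Iso k \<Longrightarrow> al m (b * e (ginv G m)) = b * e m" using b unfolding fixed_ring_def by blast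
  have aD: "al (tau k z) b \<in> D z" if z: "z \<in> Y k" for z
    using al_maps[OF tau_facts(2)[OF k z]] tau_facts(5,6)[OF k z] bD by simp
  have tw: "t * e w = (if w \<in> Y k then al (tau k w) b else 0)" if w: "w \<in> objs G" for w
  proof -
    have "t * e w = (\<Sum>z\<in>Y k. al (tau k z) b * e w)" unfolding t_def by (simp add: sum_distrib_right)
    also have "\<dots> = (\<Sum>z\<in>Y k. if z = w then al (tau k w) b else 0)"
    proof (rule sum.cong)
      fix z assume z: "z \<in> Y k"
      have zo: "z \<in> objs G" using z Y_objs[OF k] by blast
      show "al (tau k z) b * e w = (if z = w then al (tau k w) b else 0)"
      proof (cases "z = w")
        case True then show ?thesis using idr[OF objs_arr[OF zo] aD[OF z]] by simp
      next
        case False then show ?thesis using orth[OF zo w False aD[OF z]] by simp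
      qed
    qed simp
    also have "\<dots> = (if w \<in> Y k then al (tau k w) b else 0)" using finY[OF k] by (simp add: sum.delta)
    finally show ?thesis .
  qed
  have ty: "t * e (y k) = b"
    using tw[OF y_facts(2)[OF k]] y_facts[OF k] al_obj[OF y_facts(2)[OF k] bD] by simp
  have tT: "t \<in> T" unfolding fixed_ring_def
  proof (intro CollectI conjI UNIV_I ballI)
    fix h assume h: "h \<in> H"
    have ha: "h \<in> arr G" using H_arr[OF h] .
    have po: "src G h \<in> objs G" "tgt G h \<in> objs G" using src_objs[OF ha] tgt_objs[OF ha] by auto
    have pa': "src G h \<in> arr G" "tgt G h \<in> arr G" using ha gsimps by auto
    have 1: "t * e (ginv G h) = t * e (src G h) * e (ginv G h)"
      using idl[OF pa'(1)] eD[OF inv_arr[OF ha]] D_inv_src[OF ha] by (auto simp: mult.assoc)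
    have 2: "t * e h = t * e (tgt G h) * e h"
      using idl[OF pa'(2)] eD[OF ha] D_tgt[OF ha] by (auto simp: mult.assoc)
    show "al h (t * e (ginv G h)) = t * e h"
    proof (cases "src G h \<in> Y k")
      case True
      have q: "tgt G h \<in> Y k" using Y_tgt[OF k h True] .
      let ?p = "tau k (src G h)" and ?q = "tau k (tgt G h)"
      define m where "m = cmp G (ginv G ?q) (cmp G h ?p)"
      have pf: "?p \<in> H" "?p \<in> arr G" "src G ?p = y k" "tgt G ?p = src G h" using tau_facts[OF k True] by auto
      have qf: "?q \<in> H" "?q \<in> arr G" "src G ?q = y k" "tgt G ?q = tgt G h" using tau_facts[OF k q] by auto
      have c1: "cmp G h ?p \<in> H" using H_cmp[OF h pf(1)] pf(4) by simp
      have c1': "src G (cmp G h ?p) = y k" "tgt G (cmp G h ?p) = tgt G h"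
        using cmp_src[OF ha pf(2)] cmp_tgt[OF ha pf(2)] pf by auto
      have mH: "m \<in> H" unfolding m_def
        using H_cmp[OF H_inv[OF qf(1)] c1] inv_src[OF qf(2)] qf(4) c1'(2) by simp
      have ms: "src G m = y k" "tgt G m = y k" unfolding m_def
        using cmp_src[OF inv_arr[OF qf(2)] H_arr[OF c1]] cmp_tgt[OF inv_arr[OF qf(2)] H_arr[OF c1]]
          inv_src[OF qf(2)] inv_tgt[OF qf(2)] qf c1' by auto
      have mI: "m \<in> Iso k" unfolding restr_def using mH ms y_facts[OF k] by simp
      have cr: "al h (al ?p b * e (ginv G h)) = al ?q b * e h \<longleftrightarrow> al m (b * e (ginv G m)) = b * e m"
        by (rule core[OF ha pf(2) qf(2) pf(3) qf(3) pf(4) qf(4)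
           tau_facts(5)[OF k True] tau_facts(6)[OF k True] tau_facts(5)[OF k q] tau_facts(6)[OF k q] bD m_def])
      have "al h (al ?p b * e (ginv G h)) = al ?q b * e h" using cr bfix[OF mI] by simp
      then show ?thesis unfolding 1 2 using tw[OF po(1)] tw[OF po(2)] True q by simp
    next
      case False
      have q: "tgt G h \<notin> Y k" using Y_src[OF k h] False by blast
      show ?thesis unfolding 1 2 using tw[OF po(1)] tw[OF po(2)] False q al_0[OF ha] by simp
    qed
  qed
  show ?thesis using tT ty tw by auto
qed

lemma main: "\<forall>g\<in>arr G.
     g \<in> stab_arr G al e T \<longleftrightarrow>
     (\<exists>k\<in>{1..r}. src G g \<in> Y k \<and> tgt G g \<in> Y k \<and>
        cmp G (cmp G (ginv G (tau k (tgt G g))) g) (tau k (src G g))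
          \<in> stab_iso G al e (y k) (Tk k))"
proof
  fix g assume g: "g \<in> arr G"
  have lassoc: "cmp G (cmp G (ginv G (tau k (tgt G g))) g) (tau k (src G g))
      = cmp G (ginv G (tau k (tgt G g))) (cmp G g (tau k (src G g)))"
    if k: "k \<in> {1..r}" and u: "src G g \<in> Y k" and v: "tgt G g \<in> Y k" for k
    using assoc[OF inv_arr[OF tau_facts(2)[OF k v]] g tau_facts(2)[OF k u]]
      inv_src[OF tau_facts(2)[OF k v]] tau_facts(4)[OF k v] tau_facts(4)[OF k u] by simp
  have lfacts: "l \<in> arr G \<and> src G l = y k \<and> tgt G l = y k"
    if k: "k \<in> {1..r}" and u: "src G g \<in> Y k" and v: "tgt G g \<in> Y k"
     and l: "l = cmp G (ginv G (tau k (tgt G g))) (cmp G g (tau k (src G g)))" for k l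
  proof -
    let ?p = "tau k (src G g)" and ?q = "tau k (tgt G g)"
    have pf: "?p \<in> arr G" "src G ?p = y k" "tgt G ?p = src G g" using tau_facts[OF k u] by auto
    have qf: "?q \<in> arr G" "src G ?q = y k" "tgt G ?q = tgt G g" using tau_facts[OF k v] by auto
    have c1: "cmp G g ?p \<in> arr G" "src G (cmp G g ?p) = y k" "tgt G (cmp G g ?p) = tgt G g"
      using cmp_arr[OF g pf(1)] cmp_src[OF g pf(1)] cmp_tgt[OF g pf(1)] pf by auto
    show ?thesis unfolding l
      using cmp_arr[OF inv_arr[OF qf(1)] c1(1)] cmp_src[OF inv_arr[OF qf(1)] c1(1)] cmp_tgt[OF inv_arr[OF qf(1)] c1(1)]
        inv_src[OF qf(1)] inv_tgt[OF qf(1)] qf c1 by auto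
  qed
  show "g \<in> stab_arr G al e T \<longleftrightarrow>
     (\<exists>k\<in>{1..r}. src G g \<in> Y k \<and> tgt G g \<in> Y k \<and>
        cmp G (cmp G (ginv G (tau k (tgt G g))) g) (tau k (src G g))
          \<in> stab_iso G al e (y k) (Tk k))"
  proof
    assume gT: "g \<in> stab_arr G al e T"
    have gfix: "\<And>t. t \<in> T \<Longrightarrow> al g (t * e (ginv G g)) = t * e g" using gT unfolding stab_arr_def by blast
    obtain k where k: "k \<in> {1..r}" and u: "src G g \<in> Y k" using Y_cover[OF src_objs[OF g]] by blast
    have v: "tgt G g \<in> Y k"
    proof (rule ccontr)
      assume nv: "tgt G g \<notin> Y k"
      obtain t where t: "t \<in> T" "t * e (y k) = e (y k)" "\<forall>w\<in>objs G - Y k. t * e w = 0"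
        using L7[OF k L9[OF k]] by blast
      have ua: "src G g \<in> arr G" using g gsimps by auto
      have "t * e (src G g) = al (tau k (src G g)) (e (y k))" using L5[OF t(1) k u] t(2) by simp
      also have "\<dots> = e (src G g)" using al_e[OF tau_facts(2)[OF k u]] tau_facts(7,8)[OF k u] by simp
      finally have tu: "t * e (src G g) = e (src G g)" .
      have "t * e (ginv G g) = t * e (src G g) * e (ginv G g)"
        using idl[OF ua] eD[OF inv_arr[OF g]] D_inv_src[OF g] by (auto simp: mult.assoc)
      also have "\<dots> = e (ginv G g)" using tu idl[OF ua] eD[OF inv_arr[OF g]] D_inv_src[OF g] by auto
      finally have 1: "t * e (ginv G g) = e (ginv G g)" .
      have "t * e g = t * e (tgt G g) * e g"
        using idl[OF arr_tgt[OF g]] eD[OF g] D_tgt[OF g] by (auto simp: mult.assoc)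
      also have "t * e (tgt G g) = 0" using t(3) tgt_objs[OF g] nv by blast
      finally have 2: "t * e g = 0" by simp
      have "e g = 0" using gfix[OF t(1)] 1 2 al_e[OF g] by simp
      then show False using nz g by blast
    qed
    define l where "l = cmp G (ginv G (tau k (tgt G g))) (cmp G g (tau k (src G g)))"
    have lf: "l \<in> arr G" "src G l = y k" "tgt G l = y k" using lfacts[OF k u v l_def] by auto
    have "\<forall>b\<in>Tk k. al l (b * e (ginv G l)) = b * e l"
    proof
      fix b assume b: "b \<in> Tk k"
      obtain t where t: "t \<in> T" "t * e (y k) = b" using L7[OF k b] by blast
      show "al l (b * e (ginv G l)) = b * e l" using L8[OF t(1) k g u v l_def] gfix[OF t(1)] t(2) by simp
    qed
    then have "l \<in> stab_iso G al e (y k) (Tk k)" unfolding stab_iso_def using lf by blast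
    then show "\<exists>k\<in>{1..r}. src G g \<in> Y k \<and> tgt G g \<in> Y k \<and>
        cmp G (cmp G (ginv G (tau k (tgt G g))) g) (tau k (src G g))
          \<in> stab_iso G al e (y k) (Tk k)"
      using k u v lassoc[OF k u v] unfolding l_def by auto
  next
    assume "\<exists>k\<in>{1..r}. src G g \<in> Y k \<and> tgt G g \<in> Y k \<and>
        cmp G (cmp G (ginv G (tau k (tgt G g))) g) (tau k (src G g))
          \<in> stab_iso G al e (y k) (Tk k)"
    then obtain k where k: "k \<in> {1..r}" and u: "src G g \<in> Y k" and v: "tgt G g \<in> Y k"
      and ls: "cmp G (ginv G (tau k (tgt G g))) (cmp G g (tau k (src G g))) \<in> stab_iso G al e (y k) (Tk k)"
      using lassoc by auto
    define l where "l = cmp G (ginv G (tau k (tgt G g))) (cmp G g (tau k (src G g)))"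
    have lfix: "\<And>b. b \<in> Tk k \<Longrightarrow> al l (b * e (ginv G l)) = b * e l"
      using ls unfolding l_def[symmetric] stab_iso_def by blast
    have "al g (t * e (ginv G g)) = t * e g" if t: "t \<in> T" for t
      using L8[OF t k g u v l_def] lfix[OF L6[OF t k]] by simp
    then show "g \<in> stab_arr G al e T" unfolding stab_arr_def using g by blast
  qed
qed

end
theorem lemma4p2:
  fixes G :: "'g groupoid"
    and D :: "'g \<Rightarrow> 'r::ring set" and al :: "'g \<Rightarrow> 'r \<Rightarrow> 'r" and e :: "'g \<Rightarrow> 'r"
    and H :: "'g set" and r :: nat and Y :: "nat \<Rightarrow> 'g set"
    and y :: "nat \<Rightarrow> 'g" and tau :: "nat \<Rightarrow> 'g \<Rightarrow> 'g"
  assumes grpd: "is_groupoid G" and fin: "finite (arr G)" and conn: "connected_groupoid G"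
    and pa: "partial_action G D al"
    and unital: "unital_pa G D e"
    and dsum: "internal_direct_sum (objs G) D"
    and gtype: "group_type_conn G (arr G) (objs G) D"
    and nz: "\<forall>g\<in>arr G. e g \<noteq> 0"
    and H: "H \<in> wSub G D"
    and comps: "Y ` {1..r} = components G H" and Yinj: "inj_on Y {1..r}"
    and base: "\<forall>j\<in>{1..r}. y j \<in> Y j \<and> tau j (y j) = y j"
    and transv: "\<forall>j\<in>{1..r}. \<forall>z\<in>Y j. tau j z \<in> restr G H (Y j)
                    \<and> src G (tau j z) = y j \<and> tgt G (tau j z) = z
                    \<and> D (ginv G (tau j z)) = D (y j) \<and> D (tau j z) = D z"
  shows "\<forall>g\<in>arr G.
     g \<in> stab_arr G al e (fixed_ring H G al e UNIV) \<longleftrightarrow>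
     (\<exists>k\<in>{1..r}. src G g \<in> Y k \<and> tgt G g \<in> Y k \<and>
        cmp G (cmp G (ginv G (tau k (tgt G g))) g) (tau k (src G g))
          \<in> stab_iso G al e (y k)
               (fixed_ring {l \<in> restr G H (Y k). src G l = y k \<and> tgt G l = y k} G al e (D (y k))))"
proof -
  interpret M: mctx G D al e H r Y y tau
    unfolding mctx_def mctx_axioms_def pact_def pact_axioms_def gpd_def
    using grpd pa unital fin dsum nz H comps base transv by blast
  show ?thesis by (rule M.main)
qed

end
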